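(* Let $T_{init}$ be the number of nodes of the initial tree. The expected optimization time of SMO-GP-single and of SMO-GP-multi on MO-MAJORITY is $O(n\,T_{init}+n^2\log n)$.
   Context: Fix an integer $n\ge 1$; the terminal set is $T=\{x_1,\bar x_1,\dots,x_n,\bar x_n\}$ ($\bar x_i$ the complement of $x_i$). A syntax tree is either the empty tree or a rooted ordered binary tree whose inner nodes are all labelled by the binary function $J$ (join, exactly two ordered children) and whose leaves are labelled by elements of $T$. The complexity $C(X)$ is the number of nodes of $X$ (0 for the empty tree). The leaf list $l$ of $X$ is the sequence of leaf labels in inorder. MAJORITY$(X)$ is the number of indices $i$ such that $x_i$ occurs in $l$ at least once and at least as often as $\bar x_i$. MO-MAJORITY$(X)=(\mathrm{MAJORITY}(X),C(X))$, MAJORITY maximized, $C$ minimized. Mutation (HVL-Prime applied $k$ times): each application chooses uniformly at random one of three operations. Substitute: replace a uniformly random leaf by a uniformly random $u\in T$. Insert: choose a uniformly random node $v$ and uniformly random $u\in T$, replace $v$ by a $J$-node with children $u$ and $v$ in uniformly random order (inserting into the empty tree yields the single leaf $u$). Delete: choose a uniformly random leaf $v$ with parent $p$ and sibling $u$, replace $p$ by $u$ (deleting $p$ and $v$; deleting the only leaf of a one-leaf tree yields the empty tree). For single-operation mutation $k=1$; for multi-operation mutation $k=1+\mathrm{Pois}(1)$ with $\mathrm{Pois}(1)$ Poisson with mean 1. Dominance for MO-$F$: $Y\succeq X$ iff $F(Y)\ge F(X)$ and $C(Y)\le C(X)$; $Y\succ X$ iff $Y\succeq X$ and ($F(Y)>F(X)$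 or $C(Y)<C(X)$). A tree is Pareto optimal if no tree dominates it; the Pareto front is the set of objective vectors of Pareto optimal trees. SMO-GP: choose an initial tree $X$ and set $P:=\{X\}$; repeat: choose $X\in P$ uniformly at random, let $Y$ be a mutated copy of $X$; if no $Z\in P$ satisfies $Z\succ Y$, set $P:=(P\setminus\{Z\in P: Y\succeq Z\})\cup\{Y\}$. SMO-GP-single uses single-operation, SMO-GP-multi multi-operation mutation. Expected optimization time: expected number of iterations until the population contains, for every objective vector in the Pareto front, a tree with that objective vector. *)

theory Defs
  imports "HOL-Probability.Probability"
begin

text \<open>Literals: (i, True) is x_i, (i, False) is the complement of x_i; i ranges over 1..n.\<close>
type_synonym lit = "nat \<times> bool"

text \<open>Non-empty syntax trees; a syntax tree is a tree option (None = empty tree).\<close>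
datatype tree = Lf lit | J tree tree

fun tsize :: "tree \<Rightarrow> nat" where
  "tsize (Lf _) = 1"
| "tsize (J l r) = 1 + tsize l + tsize r"

definition C :: "tree option \<Rightarrow> nat" where
  "C X = (case X of None \<Rightarrow> 0 | Some t \<Rightarrow> tsize t)"

fun tleaves :: "tree \<Rightarrow> lit list" where
  "tleaves (Lf a) = [a]"
| "tleaves (J l r) = tleaves l @ tleaves r"

definition leaf_list :: "tree option \<Rightarrow> lit list" where
  "leaf_list X = (case X of None \<Rightarrow> [] | Some t \<Rightarrow> tleaves t)"

definition lit_list :: "nat \<Rightarrow> lit list" where
  "lit_list n = concat (map (\<lambda>i. [(i, True), (i, False)]) [1..<Suc n])"

definition valid :: "nat \<Rightarrow> tree option \<Rightarrow> bool" where
  "valid n X \<longleftrightarrow> set (leaf_list X) \<subseteq> set (lit_list n)"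

definition MAJ :: "nat \<Rightarrow> tree option \<Rightarrow> nat" where
  "MAJ n X = card {i \<in> {1..n}.
      count_list (leaf_list X) (i, True) \<ge> 1 \<and>
      count_list (leaf_list X) (i, True) \<ge> count_list (leaf_list X) (i, False)}"

definition obj :: "nat \<Rightarrow> tree option \<Rightarrow> nat \<times> nat" where
  "obj n X = (MAJ n X, C X)"

definition wdom :: "nat \<Rightarrow> tree option \<Rightarrow> tree option \<Rightarrow> bool" where
  "wdom n Y X \<longleftrightarrow> MAJ n Y \<ge> MAJ n X \<and> C Y \<le> C X"

definition sdom :: "nat \<Rightarrow> tree option \<Rightarrow> tree option \<Rightarrow> bool" where
  "sdom n Y X \<longleftrightarrow> wdom n Y X \<and> (MAJ n Y > MAJ n X \<or> C Y < C X)"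

definition pareto_opt :: "nat \<Rightarrow> tree option \<Rightarrow> bool" where
  "pareto_opt n X \<longleftrightarrow> valid n X \<and> \<not> (\<exists>Y. valid n Y \<and> sdom n Y X)"

definition pareto_front :: "nat \<Rightarrow> (nat \<times> nat) set" where
  "pareto_front n = {obj n X | X. pareto_opt n X}"

definition unif_list :: "'a list \<Rightarrow> 'a pmf" where
  "unif_list xs = map_pmf (nth xs) (pmf_of_set {..<length xs})"

fun subst_all :: "tree \<Rightarrow> lit \<Rightarrow> tree list" where
  "subst_all (Lf _) u = [Lf u]"
| "subst_all (J l r) u = map (\<lambda>l'. J l' r) (subst_all l u) @ map (\<lambda>r'. J l r') (subst_all r u)"

definition mkJ :: "bool \<Rightarrow> lit \<Rightarrow> tree \<Rightarrow> tree" where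
  "mkJ b u v = (if b then J (Lf u) v else J v (Lf u))"

fun ins_all :: "tree \<Rightarrow> lit \<Rightarrow> bool \<Rightarrow> tree list" where
  "ins_all (Lf a) u b = [mkJ b u (Lf a)]"
| "ins_all (J l r) u b = mkJ b u (J l r) # map (\<lambda>l'. J l' r) (ins_all l u b)
      @ map (\<lambda>r'. J l r') (ins_all r u b)"

fun del_all :: "tree \<Rightarrow> tree option list" where
  "del_all (Lf _) = [None]"
| "del_all (J l r) =
     map (\<lambda>x. Some (case x of None \<Rightarrow> r | Some l' \<Rightarrow> J l' r)) (del_all l)
   @ map (\<lambda>x. Some (case x of None \<Rightarrow> l | Some r' \<Rightarrow> J l r')) (del_all r)"

definition substitute :: "nat \<Rightarrow> tree option \<Rightarrow> tree option pmf" where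
  "substitute n X = (case X of None \<Rightarrow> return_pmf None
     | Some t \<Rightarrow> bind_pmf (unif_list (lit_list n))
         (\<lambda>u. map_pmf Some (unif_list (subst_all t u))))"

definition insert_op :: "nat \<Rightarrow> tree option \<Rightarrow> tree option pmf" where
  "insert_op n X = (case X of None \<Rightarrow> map_pmf (\<lambda>u. Some (Lf u)) (unif_list (lit_list n))
     | Some t \<Rightarrow> bind_pmf (unif_list (lit_list n)) (\<lambda>u.
         bind_pmf (pmf_of_set (UNIV :: bool set)) (\<lambda>b.
           map_pmf Some (unif_list (ins_all t u b)))))"

definition delete_op :: "tree option \<Rightarrow> tree option pmf" where
  "delete_op X = (case X of None \<Rightarrow> return_pmf None
     | Some t \<Rightarrow> unif_list (del_all t))"

definition hvl :: "nat \<Rightarrow> tree option \<Rightarrow> tree option pmf" where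
  "hvl n X = bind_pmf (pmf_of_set {0::nat, 1, 2}) (\<lambda>op.
     if op = 0 then substitute n X else if op = 1 then insert_op n X else delete_op X)"

definition mut_single :: "nat \<Rightarrow> tree option \<Rightarrow> tree option pmf" where
  "mut_single n X = hvl n X"

definition mut_multi :: "nat \<Rightarrow> tree option \<Rightarrow> tree option pmf" where
  "mut_multi n X = bind_pmf (poisson_pmf 1) (\<lambda>k.
     ((\<lambda>D. bind_pmf D (hvl n)) ^^ Suc k) (return_pmf X))"

definition smo_step :: "nat \<Rightarrow> (tree option \<Rightarrow> tree option pmf) \<Rightarrow> tree option set
    \<Rightarrow> tree option set pmf" where
  "smo_step n mut P = bind_pmf (pmf_of_set P) (\<lambda>X. map_pmf (\<lambda>Y.
     if (\<exists>Z\<in>P. sdom n Z Y) then P else (P - {Z \<in> P. wdom n Y Z}) \<union> {Y}) (mut X))"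

definition covers_front :: "nat \<Rightarrow> tree option set \<Rightarrow> bool" where
  "covers_front n P \<longleftrightarrow> (\<forall>v \<in> pareto_front n. \<exists>X\<in>P. obj n X = v)"

definition stopped_dist :: "nat \<Rightarrow> (tree option \<Rightarrow> tree option pmf) \<Rightarrow> tree option
    \<Rightarrow> nat \<Rightarrow> tree option set pmf" where
  "stopped_dist n mut X0 t = ((\<lambda>D. bind_pmf D (\<lambda>P.
      if covers_front n P then return_pmf P else smo_step n mut P)) ^^ t) (return_pmf {X0})"

text \<open>Expected optimization time E[T] = sum over t of Pr[T > t].\<close>
definition opt_time :: "nat \<Rightarrow> (tree option \<Rightarrow> tree option pmf) \<Rightarrow> tree option \<Rightarrow> ennreal" where
  "opt_time n mut X0 = (\<Sum>t. ennreal (measure_pmf.prob (stopped_dist n mut X0 t)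
      {P. \<not> covers_front n P}))"

end

theory Submission
  imports Defs
begin


lemma drift_bound:
  fixes K :: "'s \<Rightarrow> 's pmf" and h :: "'s \<Rightarrow> ennreal"
  assumes I0: "I s0"
  and inv: "\<And>s s'. I s \<Longrightarrow> \<not> G s \<Longrightarrow> s' \<in> set_pmf (K s) \<Longrightarrow> I s'"
  and dr: "\<And>s. I s \<Longrightarrow> \<not> G s \<Longrightarrow> 1 + (\<integral>\<^sup>+ x. h x \<partial>K s) \<le> h s"
  shows "(\<Sum>t. ennreal (measure_pmf.prob (((\<lambda>D. bind_pmf D (\<lambda>s. if G s then return_pmf s else K s)) ^^ t) (return_pmf s0)) {s. \<not> G s})) \<le> h s0"
proof -
  define K' where "K' = (\<lambda>s. if G s then return_pmf s else K s)"
  define D where "D t = ((\<lambda>D. bind_pmf D K') ^^ t) (return_pmf s0)" for t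
  have DS: "D (Suc t) = bind_pmf (D t) K'" for t by (simp add: D_def)
  have key: "(\<Sum>u<t. ennreal (measure_pmf.prob (D u) {s. \<not> G s})) + (\<integral>\<^sup>+ x. h x \<partial>D t) \<le> h s0
        \<and> (\<forall>s\<in>set_pmf (D t). I s)" for t
  proof (induction t)
    case 0
    then show ?case using I0 by (simp add: D_def nn_integral_return_pmf)
  next
    case (Suc t)
    have invs: "\<forall>s\<in>set_pmf (D (Suc t)). I s"
      using Suc.IH inv by (auto simp: DS K'_def split: if_splits)
    have pt: "ennreal (measure_pmf.prob (D t) {s. \<not> G s}) = (\<integral>\<^sup>+ s. indicator {s. \<not> G s} s \<partial>D t)"
      by (simp add: measure_pmf.emeasure_eq_measure)
    have "ennreal (measure_pmf.prob (D t) {s. \<not> G s}) + (\<integral>\<^sup>+ x. h x \<partial>D (Suc t))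
        = (\<integral>\<^sup>+ s. indicator {s. \<not> G s} s + (\<integral>\<^sup>+ x. h x \<partial>K' s) \<partial>D t)"
      by (simp add: pt DS nn_integral_add)
    also have "\<dots> \<le> (\<integral>\<^sup>+ s. h s \<partial>D t)"
    proof (rule nn_integral_mono_AE)
      show "AE s in measure_pmf (D t). indicator {s. \<not> G s} s + (\<integral>\<^sup>+ x. h x \<partial>K' s) \<le> h s"
      proof (rule AE_pmfI)
        fix s assume "s \<in> set_pmf (D t)"
        then have "I s" using Suc.IH by auto
        show "indicator {s. \<not> G s} s + (\<integral>\<^sup>+ x. h x \<partial>K' s) \<le> h s"
        proof (cases "G s")
          case True then show ?thesis by (simp add: K'_def nn_integral_return_pmf)
        next
          case False then show ?thesis using dr[OF \<open>I s\<close> False] by (simp add: K'_def)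
        qed
      qed
    qed
    finally have st: "ennreal (measure_pmf.prob (D t) {s. \<not> G s}) + (\<integral>\<^sup>+ x. h x \<partial>D (Suc t)) \<le> (\<integral>\<^sup>+ s. h s \<partial>D t)" .
    have "(\<Sum>u<Suc t. ennreal (measure_pmf.prob (D u) {s. \<not> G s})) + (\<integral>\<^sup>+ x. h x \<partial>D (Suc t))
       = (\<Sum>u<t. ennreal (measure_pmf.prob (D u) {s. \<not> G s})) + (ennreal (measure_pmf.prob (D t) {s. \<not> G s}) + (\<integral>\<^sup>+ x. h x \<partial>D (Suc t)))"
      by (simp add: add.assoc)
    also have "\<dots> \<le> (\<Sum>u<t. ennreal (measure_pmf.prob (D u) {s. \<not> G s})) + (\<integral>\<^sup>+ s. h s \<partial>D t)"
      using st by (rule add_left_mono)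
    also have "\<dots> \<le> h s0" using Suc.IH by auto
    finally show ?case using invs by auto
  qed
  have "(\<Sum>t. ennreal (measure_pmf.prob (D t) {s. \<not> G s})) \<le> h s0"
  proof (rule suminf_le_const)
    show "summable (\<lambda>t. ennreal (measure_pmf.prob (D t) {s. \<not> G s}))" by simp
    fix t show "(\<Sum>u<t. ennreal (measure_pmf.prob (D u) {s. \<not> G s})) \<le> h s0"
      using key[of t] by (meson add_increasing2 order_trans zero_le le_iff_add)
  qed
  then show ?thesis by (simp add: D_def K'_def)
qed

lemma prob_bind_ge:
  assumes "\<And>x. x \<in> A \<Longrightarrow> x \<in> set_pmf M \<Longrightarrow> measure_pmf.prob (f x) E \<ge> q" "q \<ge> 0"
  shows "measure_pmf.prob (bind_pmf M f) E \<ge> measure_pmf.prob M A * q"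
proof -
  have "measure_pmf.prob M A * q = (\<integral>x. indicator A x * q \<partial>M)" by simp
  also have "\<dots> \<le> (\<integral>x. measure_pmf.prob (f x) E \<partial>M)"
  proof (rule integral_mono_AE)
    show "integrable (measure_pmf M) (\<lambda>x. indicator A x * q)"
      by (rule measure_pmf.integrable_const_bound[where B="abs q"]) (auto simp: indicator_def)
    show "integrable (measure_pmf M) (\<lambda>x. measure_pmf.prob (f x) E)"
      by (rule measure_pmf.integrable_const_bound[where B=1]) auto
    show "AE x in measure_pmf M. indicator A x * q \<le> measure_pmf.prob (f x) E"
      using assms by (auto intro!: AE_pmfI simp: indicator_def)
  qed
  also have "\<dots> = measure_pmf.prob (bind_pmf M f) E"
    unfolding measure_pmf_bind by (subst measure_pmf.measure_bind[where N="count_space UNIV"]) (auto simp: space_subprob_algebra measure_pmf_in_subprob_algebra intro: prob_space_imp_subprob_space measure_pmf.prob_space_axioms)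
  finally show ?thesis .
qed



lemma tsize_leaves: "tsize t + 1 = 2 * length (tleaves t)"
  by (induction t) auto

lemma tleaves_ne: "tleaves t \<noteq> []"
  by (induction t) auto

lemma tsize_pos: "tsize t \<ge> 1"
  by (cases t) auto

lemma C_eq0: "C X = 0 \<longleftrightarrow> X = None"
proof (cases X)
  case (Some t) then show ?thesis using tsize_pos[of t] by (simp add: C_def)
qed (simp add: C_def)

definition majset :: "nat \<Rightarrow> tree option \<Rightarrow> nat set" where
  "majset n X = {i \<in> {1..n}.
      count_list (leaf_list X) (i, True) \<ge> 1 \<and>
      count_list (leaf_list X) (i, True) \<ge> count_list (leaf_list X) (i, False)}"

lemma MAJ_majset: "MAJ n X = card (majset n X)"
  by (simp add: MAJ_def majset_def)

lemma majset_sub: "majset n X \<subseteq> {1..n}"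
  by (auto simp: majset_def)

lemma MAJ_le_n: "MAJ n X \<le> n"
  unfolding MAJ_majset using card_mono[OF _ majset_sub] by fastforce

lemma MAJ_le_len: "MAJ n X \<le> length (leaf_list X)"
proof -
  have "majset n X \<subseteq> fst ` set (leaf_list X)"
  proof
    fix i assume "i \<in> majset n X"
    then have "count_list (leaf_list X) (i, True) \<ge> 1" by (simp add: majset_def)
    then have "(i, True) \<in> set (leaf_list X)"
      by (metis count_notin not_one_le_zero)
    then show "i \<in> fst ` set (leaf_list X)" by force
  qed
  then have "card (majset n X) \<le> card (fst ` set (leaf_list X))" by (simp add: card_mono)
  also have "\<dots> \<le> card (set (leaf_list X))" by (rule card_image_le) simp
  also have "\<dots> \<le> length (leaf_list X)" by (rule card_length)
  finally show ?thesis by (simp add: MAJ_majset)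
qed

lemma C_len: "X \<noteq> None \<Longrightarrow> C X + 1 = 2 * length (leaf_list X)"
  using tsize_leaves by (auto simp: C_def leaf_list_def)

lemma maj_C: "2 * MAJ n X \<le> C X + 1"
proof (cases X)
  case None then show ?thesis using MAJ_le_len[of n X] by (simp add: leaf_list_def C_def)
next
  case (Some t) then show ?thesis using MAJ_le_len[of n X] C_len[of X] by simp
qed

lemma wdom_opt:
  assumes "wdom n Y Z" "obj n Z = (k, 2*k-1)"
  shows "obj n Y = (k, 2*k-1)"
proof -
  have a: "MAJ n Y \<ge> k" "C Y \<le> 2*k-1" using assms by (auto simp: wdom_def obj_def)
  have "2 * MAJ n Y \<le> C Y + 1" by (rule maj_C)
  show ?thesis
  proof (cases "k = 0")
    case True then show ?thesis using a by (simp add: obj_def) (use maj_C[of n Y] in linarith)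
  next
    case False then show ?thesis using a maj_C[of n Y] by (simp add: obj_def) arith
  qed
qed

lemma not_sdom_opt:
  assumes "obj n Y = (k, 2*k-1)"
  shows "\<not> sdom n Z Y"
proof
  assume "sdom n Z Y"
  then have w: "wdom n Z Y" and s: "MAJ n Z > MAJ n Y \<or> C Z < C Y" by (auto simp: sdom_def)
  from wdom_opt[OF w assms] have "obj n Z = obj n Y" using assms by simp
  with s show False by (simp add: obj_def)
qed

lemma ins_all_prop: "t' \<in> set (ins_all t u b) \<Longrightarrow>
   mset (tleaves t') = add_mset u (mset (tleaves t)) \<and> tsize t' = tsize t + 2"
  by (induction t arbitrary: t') (auto simp: mkJ_def)

lemma subst_all_prop: "t' \<in> set (subst_all t u) \<Longrightarrow> set (tleaves t') \<subseteq> insert u (set (tleaves t))"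
proof (induction t arbitrary: t')
  case (J t1 t2)
  from J.prems show ?case using J.IH by (auto; blast)
qed auto

lemma del_all_prop: "x \<in> set (del_all t) \<Longrightarrow> C x < tsize t \<and> set (leaf_list x) \<subseteq> set (tleaves t)"
proof (induction t arbitrary: x)
  case (J t1 t2)
  from J.prems consider x1 where "x1 \<in> set (del_all t1)" "x = Some (case x1 of None \<Rightarrow> t2 | Some l' \<Rightarrow> J l' t2)"
    | x1 where "x1 \<in> set (del_all t2)" "x = Some (case x1 of None \<Rightarrow> t1 | Some r' \<Rightarrow> J t1 r')"
    by auto
  then show ?case
  proof cases
    case 1
    have ih: "C x1 < tsize t1 \<and> set (leaf_list x1) \<subseteq> set (tleaves t1)" using J.IH(1)[OF 1(1)] .
    show ?thesis
    proof (cases x1)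
      case None then show ?thesis using 1(2) by (auto simp: C_def leaf_list_def)
    next
      case (Some a) then show ?thesis using 1(2) ih by (auto simp: C_def leaf_list_def)
    qed
  next
    case 2
    have ih: "C x1 < tsize t2 \<and> set (leaf_list x1) \<subseteq> set (tleaves t2)" using J.IH(2)[OF 2(1)] .
    show ?thesis
    proof (cases x1)
      case None then show ?thesis using 2(2) by (auto simp: C_def leaf_list_def)
    next
      case (Some a) then show ?thesis using 2(2) ih by (auto simp: C_def leaf_list_def)
    qed
  qed
qed (auto simp: C_def leaf_list_def)

lemma ins_all_ne: "ins_all t u b \<noteq> []" by (cases t) auto
lemma subst_all_ne: "subst_all t u \<noteq> []" by (induction t) auto
lemma del_all_ne: "del_all t \<noteq> []" by (induction t) auto



fun comb :: "lit list \<Rightarrow> tree" where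
  "comb [] = Lf (0, True)"
| "comb [a] = Lf a"
| "comb (a # b # xs) = J (Lf a) (comb (b # xs))"

lemma tleaves_comb: "xs \<noteq> [] \<Longrightarrow> tleaves (comb xs) = xs"
  by (induction xs rule: comb.induct) auto

lemma set_lit_list: "set (lit_list n) = {1..n} \<times> UNIV"
  by (auto simp: lit_list_def)

lemma witness:
  assumes "i \<le> n"
  shows "\<exists>W. valid n W \<and> MAJ n W = i \<and> C W = 2*i-1"
proof (cases "i = 0")
  case True
  then show ?thesis
    by (intro exI[of _ None]) (simp add: valid_def leaf_list_def MAJ_def C_def)
next
  case False
  define xs where "xs = map (\<lambda>j. (j, True)) [1..<Suc i]"
  have ne: "xs \<noteq> []" using False by (simp add: xs_def)
  define W where "W = Some (comb xs)"
  have ll: "leaf_list W = xs" using ne by (simp add: W_def leaf_list_def tleaves_comb)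
  have len: "length xs = i" by (simp add: xs_def)
  have v: "valid n W" using assms by (auto simp: valid_def ll xs_def set_lit_list)
  have "{1..i} \<subseteq> majset n W"
  proof
    fix j assume j: "j \<in> {1..i}"
    have "(j, True) \<in> set xs" using j by (auto simp: xs_def)
    then have c1: "count_list xs (j, True) \<ge> 1"
      by (metis count_list_0_iff less_one not_le)
    have "(j, False) \<notin> set xs" by (auto simp: xs_def)
    then have "count_list xs (j, False) = 0" by (simp add: count_list_0_iff)
    then show "j \<in> majset n W" using c1 j assms by (auto simp: majset_def ll)
  qed
  then have "i \<le> MAJ n W" unfolding MAJ_majset
    by (metis card_atLeastAtMost card_mono diff_Suc_1 finite_subset majset_sub finite_atLeastAtMost)
  moreover have "MAJ n W \<le> i" using MAJ_le_len[of n W] by (simp add: ll len)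
  moreover have "C W = 2*i-1" using C_len[of W] ll len by (simp add: W_def)
  ultimately show ?thesis using v by (intro exI[of _ W]) auto
qed

lemma pareto_obj:
  assumes "pareto_opt n X"
  shows "\<exists>i\<le>n. obj n X = (i, 2*i-1)"
proof -
  define i where "i = MAJ n X"
  have i: "i \<le> n" using MAJ_le_n by (simp add: i_def)
  have ge: "C X \<ge> 2*i-1" using maj_C[of n X] by (simp add: i_def)
  obtain W where W: "valid n W" "MAJ n W = i" "C W = 2*i-1" using witness[OF i] by blast
  have "\<not> sdom n W X" using assms W by (auto simp: pareto_opt_def)
  then have "C X \<le> 2*i-1" using W by (auto simp: sdom_def wdom_def i_def)
  then show ?thesis using ge i by (intro exI[of _ i]) (auto simp: obj_def i_def)
qed

definition good :: "nat \<Rightarrow> nat \<Rightarrow> tree option set \<Rightarrow> bool" where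
  "good n j P \<longleftrightarrow> (\<forall>i\<le>j. \<exists>Z\<in>P. obj n Z = (i, 2*i-1))"

lemma good_covers: "good n n P \<Longrightarrow> covers_front n P"
  unfolding covers_front_def pareto_front_def good_def using pareto_obj by fastforce

lemma good0: "good n 0 P \<longleftrightarrow> None \<in> P"
  by (auto simp: good_def obj_def C_eq0 MAJ_def leaf_list_def)



definition acc :: "nat \<Rightarrow> tree option set \<Rightarrow> tree option \<Rightarrow> tree option set" where
  "acc n P Y = (if (\<exists>Z\<in>P. sdom n Z Y) then P else (P - {Z \<in> P. wdom n Y Z}) \<union> {Y})"

lemma smo_step_acc: "smo_step n mut P = bind_pmf (pmf_of_set P) (\<lambda>X. map_pmf (acc n P) (mut X))"
  unfolding smo_step_def acc_def by (rule refl)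

lemma wdom_refl: "wdom n Z Z" by (simp add: wdom_def)

lemma acc_keep: "Z \<in> P \<Longrightarrow> \<exists>Z'\<in>acc n P Y. wdom n Z' Z"
  unfolding acc_def using wdom_refl by (cases "\<exists>Z\<in>P. sdom n Z Y") auto

lemma acc_in: "\<not> (\<exists>Z\<in>P. sdom n Z Y) \<Longrightarrow> Y \<in> acc n P Y"
  by (simp add: acc_def)

definition Inv :: "nat \<Rightarrow> tree option set \<Rightarrow> bool" where
  "Inv n P \<longleftrightarrow> finite P \<and> P \<noteq> {} \<and> (\<forall>Z\<in>P. valid n Z) \<and>
      (\<forall>Z1\<in>P. \<forall>Z2\<in>P. Z1 \<noteq> Z2 \<longrightarrow> \<not> wdom n Z1 Z2)"

lemma Inv_acc:
  assumes "Inv n P" "valid n Y"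
  shows "Inv n (acc n P Y)"
proof (cases "\<exists>Z\<in>P. sdom n Z Y")
  case True then show ?thesis using assms by (simp add: acc_def)
next
  case False
  have eq: "acc n P Y = (P - {Z \<in> P. wdom n Y Z}) \<union> {Y}" using False by (simp add: acc_def)
  have "\<not> wdom n Z Y" if "Z \<in> P" "\<not> wdom n Y Z" for Z
  proof
    assume "wdom n Z Y"
    moreover have "\<not> sdom n Z Y" using False that by auto
    ultimately have "MAJ n Z = MAJ n Y" "C Z = C Y" by (auto simp: sdom_def wdom_def)
    then show False using that by (simp add: wdom_def)
  qed
  then show ?thesis using assms unfolding Inv_def eq by auto
qed

lemma Inv_card: assumes "Inv n P" shows "card P \<le> n + 1"
proof -
  have inj: "inj_on (MAJ n) P"
  proof (rule inj_onI)
    fix Z1 Z2 assume "Z1 \<in> P" "Z2 \<in> P" "MAJ n Z1 = MAJ n Z2"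
    then show "Z1 = Z2" using assms unfolding Inv_def wdom_def
      by (metis nat_le_linear order_refl)
  qed
  have "card P = card (MAJ n ` P)" using card_image[OF inj] by simp
  also have "\<dots> \<le> card {0..n}" by (rule card_mono) (auto simp: MAJ_le_n)
  finally show ?thesis by simp
qed

lemma good_acc: "good n j P \<Longrightarrow> good n j (acc n P Y)"
  unfolding good_def using acc_keep wdom_opt by metis

lemma None_acc: "None \<in> P \<Longrightarrow> None \<in> acc n P Y"
  using good_acc[of n 0 P Y] by (simp add: good0)

lemma C_acc: "Z \<in> P \<Longrightarrow> \<exists>Z'\<in>acc n P Y. C Z' \<le> C Z"
  using acc_keep unfolding wdom_def by blast



lemma set_unif: "xs \<noteq> [] \<Longrightarrow> set_pmf (unif_list xs) = set xs"
proof -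
  assume "xs \<noteq> []"
  then have "set_pmf (pmf_of_set {..<length xs}) = {..<length xs}" by (subst set_pmf_of_set) auto
  then show ?thesis by (auto simp: unif_list_def set_conv_nth)
qed

lemma prob_unif:
  assumes "distinct xs" "xs \<noteq> []"
  shows "measure_pmf.prob (unif_list xs) G = card (set xs \<inter> G) / length xs"
proof -
  have "measure_pmf.prob (unif_list xs) G = card ({..<length xs} \<inter> (nth xs -` G)) / length xs"
    using assms unfolding unif_list_def measure_map_pmf by (subst measure_pmf_of_set) auto
  also have "card ({..<length xs} \<inter> (nth xs -` G)) = card (nth xs ` ({..<length xs} \<inter> (nth xs -` G)))"
    by (rule card_image[symmetric]) (rule inj_on_nth, use assms in auto)
  also have "nth xs ` ({..<length xs} \<inter> (nth xs -` G)) = set xs \<inter> G"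
    by (auto simp: set_conv_nth)
  finally show ?thesis .
qed

lemma distinct_lit_list: "distinct (lit_list n)"
  unfolding lit_list_def by (induction n) (auto simp: distinct_append)

lemma length_lit_list: "length (lit_list n) = 2 * n"
  unfolding lit_list_def by (induction n) auto

lemma lit_list_ne: "n \<ge> 1 \<Longrightarrow> lit_list n \<noteq> []"
  using length_lit_list[of n] by auto

lemma hvl_valid:
  assumes "n \<ge> 1" "valid n X" "Y \<in> set_pmf (hvl n X)"
  shows "valid n Y"
proof -
  have u: "set_pmf (unif_list (lit_list n)) = set (lit_list n)" using lit_list_ne[OF assms(1)] set_unif by blast
  have s: "valid n Y" if "Y \<in> set_pmf (substitute n X)"
  proof (cases X)
    case None then show ?thesis using that assms by (simp add: substitute_def)
  next
    case (Some t)
    have "Y \<in> (\<Union>u\<in>set (lit_list n). Some ` set (subst_all t u))"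
      using that unfolding Some substitute_def option.case set_bind_pmf set_map_pmf u
      by (simp only: set_unif[OF subst_all_ne])
    then obtain u t' where "u \<in> set (lit_list n)" "t' \<in> set (subst_all t u)" "Y = Some t'"
      by blast
    then show ?thesis using assms(2) Some subst_all_prop[of t' t u]
      by (auto simp: valid_def leaf_list_def)
  qed
  have i: "valid n Y" if "Y \<in> set_pmf (insert_op n X)"
  proof (cases X)
    case None
    have "Y \<in> (\<lambda>u. Some (Lf u)) ` set (lit_list n)"
      using that unfolding None insert_op_def option.case set_map_pmf u .
    then obtain u where "u \<in> set (lit_list n)" "Y = Some (Lf u)" by blast
    then show ?thesis by (simp add: valid_def leaf_list_def)
  next
    case (Some t)
    have "Y \<in> (\<Union>u\<in>set (lit_list n). \<Union>b\<in>set_pmf (pmf_of_set (UNIV::bool set)). Some ` set (ins_all t u b))"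
      using that unfolding Some insert_op_def option.case set_bind_pmf set_map_pmf u
      by (simp only: set_unif[OF ins_all_ne])
    then obtain u b t' where "u \<in> set (lit_list n)" "t' \<in> set (ins_all t u b)" "Y = Some t'"
      by blast
    moreover have "set (tleaves t') = insert u (set (tleaves t))"
      using ins_all_prop[of t' t u b] \<open>t' \<in> set (ins_all t u b)\<close> by (metis set_mset_mset set_mset_add_mset_insert)
    ultimately show ?thesis using assms(2) Some
      by (auto simp: valid_def leaf_list_def)
  qed
  have d: "valid n Y" if "Y \<in> set_pmf (delete_op X)"
  proof (cases X)
    case None then show ?thesis using that assms by (simp add: delete_op_def)
  next
    case (Some t)
    have "Y \<in> set (del_all t)" using that unfolding Some delete_op_def option.case
      by (simp only: set_unif[OF del_all_ne])
    then show ?thesis using assms(2) Some del_all_prop[of Y t] by (auto simp: valid_def leaf_list_def)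
  qed
  from assms(3) obtain op :: nat where "Y \<in> set_pmf (if op = 0 then substitute n X else if op = 1 then insert_op n X else delete_op X)"
    unfolding hvl_def set_bind_pmf by blast
  then show ?thesis using s i d by (auto split: if_splits)
qed

lemma third: "measure_pmf.prob (pmf_of_set {0::nat, 1, 2}) {k} = 1/3" if "k \<in> {0,1,2}"
  using that by (auto simp: measure_pmf_of_set)

lemma hvl_ins: "measure_pmf.prob (hvl n X) E \<ge> measure_pmf.prob (insert_op n X) E / 3"
proof -
  have "measure_pmf.prob (hvl n X) E \<ge> measure_pmf.prob (pmf_of_set {0::nat,1,2}) {1} * measure_pmf.prob (insert_op n X) E"
    unfolding hvl_def by (rule prob_bind_ge) auto
  moreover have "measure_pmf.prob (pmf_of_set {0::nat,1,2}) {1} = 1/3" by (rule third) simp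
  ultimately have "(1/3) * measure_pmf.prob (insert_op n X) E \<le> measure_pmf.prob (hvl n X) E" by metis
  then show ?thesis by simp
qed

lemma hvl_del: "measure_pmf.prob (hvl n X) E \<ge> measure_pmf.prob (delete_op X) E / 3"
proof -
  have "measure_pmf.prob (hvl n X) E \<ge> measure_pmf.prob (pmf_of_set {0::nat,1,2}) {2} * measure_pmf.prob (delete_op X) E"
    unfolding hvl_def by (rule prob_bind_ge) auto
  moreover have "measure_pmf.prob (pmf_of_set {0::nat,1,2}) {2} = 1/3" by (rule third) simp
  ultimately have "(1/3) * measure_pmf.prob (delete_op X) E \<le> measure_pmf.prob (hvl n X) E" by metis
  then show ?thesis by simp
qed

definition mutok :: "nat \<Rightarrow> (tree option \<Rightarrow> tree option pmf) \<Rightarrow> bool" where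
  "mutok n mut \<longleftrightarrow> (\<forall>X E. measure_pmf.prob (mut X) E \<ge> measure_pmf.prob (hvl n X) E / 3) \<and>
     (\<forall>X Y. valid n X \<longrightarrow> Y \<in> set_pmf (mut X) \<longrightarrow> valid n Y)"

lemma mutok_single: "n \<ge> 1 \<Longrightarrow> mutok n (mut_single n)"
  unfolding mutok_def mut_single_def using hvl_valid
  by (auto simp: divide_le_eq measure_nonneg)

lemma iter_valid:
  assumes "n \<ge> 1" "valid n X" "Y \<in> set_pmf (((\<lambda>D. bind_pmf D (hvl n)) ^^ k) (return_pmf X))"
  shows "valid n Y"
  using assms(3)
proof (induction k arbitrary: Y)
  case 0 then show ?case using assms(2) by simp
next
  case (Suc k) then show ?case using hvl_valid[OF assms(1)] by auto
qed

lemma mutok_multi: "n \<ge> 1 \<Longrightarrow> mutok n (mut_multi n)"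
proof -
  assume n: "n \<ge> 1"
  have p0: "measure_pmf.prob (poisson_pmf 1) {0} = exp (-1)"
    by (simp add: measure_pmf_single)
  have e: "exp (-1::real) \<ge> 1/3"
  proof -
    have "exp (1::real) \<le> 3" by (rule exp_le)
    then have "1 / 3 \<le> 1 / exp (1::real)" by (simp add: divide_le_eq)
    then show ?thesis by (simp add: exp_minus field_simps)
  qed
  have "measure_pmf.prob (mut_multi n X) E \<ge> measure_pmf.prob (hvl n X) E / 3" for X E
  proof -
    have "measure_pmf.prob (mut_multi n X) E \<ge> measure_pmf.prob (poisson_pmf 1) {0} * measure_pmf.prob (hvl n X) E"
      unfolding mut_multi_def by (rule prob_bind_ge) (auto simp: bind_return_pmf)
    moreover have "measure_pmf.prob (hvl n X) E / 3 \<le> exp (-1) * measure_pmf.prob (hvl n X) E"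
      using e mult_right_mono[OF e measure_nonneg[of "measure_pmf (hvl n X)" E]] by simp
    ultimately show ?thesis using p0 by simp
  qed
  moreover have "valid n Y" if "valid n X" "Y \<in> set_pmf (mut_multi n X)" for X Y
  proof -
    from that(2) obtain k where "Y \<in> set_pmf (((\<lambda>D. bind_pmf D (hvl n)) ^^ Suc k) (return_pmf X))"
      unfolding mut_multi_def set_bind_pmf by blast
    then show ?thesis using iter_valid[OF n that(1)] by blast
  qed
  ultimately show ?thesis unfolding mutok_def by blast
qed



lemma prob_one: "set_pmf M \<subseteq> S \<Longrightarrow> measure_pmf.prob M S = 1"
  by (rule measure_pmf.prob_eq_1[THEN iffD2]) (auto intro!: AE_pmfI)

lemma sum_count: "finite A \<Longrightarrow> (\<Sum>x\<in>A. count_list l x) + length (filter (\<lambda>x. x \<notin> A) l) = length l"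
proof (induction l)
  case Nil then show ?case by simp
next
  case (Cons a l)
  have "(\<Sum>x\<in>A. count_list (a # l) x) = (\<Sum>x\<in>A. count_list l x) + (\<Sum>x\<in>A. if a = x then 1 else 0)"
    by (subst sum.distrib[symmetric]) (rule sum.cong, auto)
  also have "(\<Sum>x\<in>A. if a = x then 1 else (0::nat)) = (if a \<in> A then 1 else 0)"
    using Cons.prems by (simp add: sum.delta)
  finally show ?case using Cons by auto
qed

lemma count_mset_add: "mset l' = add_mset u (mset l) \<Longrightarrow> count_list l' x = count_list l x + (if x = u then 1 else 0)"
proof -
  assume h: "mset l' = add_mset u (mset l)"
  have "count (mset l') x = count (add_mset u (mset l)) x" by (simp only: h)
  then show ?thesis by (simp add: count_mset)
qed

lemma obj_insert:
  assumes obj: "obj n Z = (k, 2*k-1)" and i: "i \<in> {1..n} - majset n Z"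
    and ms: "mset (leaf_list Y) = add_mset (i, True) (mset (leaf_list Z))" and Y: "Y \<noteq> None"
  shows "obj n Y = (k+1, 2*(k+1)-1)"
proof -
  define l where "l = leaf_list Z"
  have MZ: "card (majset n Z) = k" using obj by (simp add: obj_def MAJ_majset)
  have lenl: "length l = k"
  proof (cases Z)
    case None then show ?thesis using obj by (simp add: l_def leaf_list_def obj_def MAJ_def C_def)
  next
    case (Some t)
    have "C Z \<noteq> 0" using Some C_eq0 by auto
    then have "k \<ge> 1" using obj by (simp add: obj_def)
    then show ?thesis using C_len[of Z] Some obj by (simp add: l_def obj_def)
  qed
  have lenY: "length (leaf_list Y) = k + 1"
    using arg_cong[OF ms, of size] lenl by (simp add: l_def)
  define A where "A = (\<lambda>j. (j, True)) ` majset n Z"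
  have finA: "finite A" using finite_subset[OF majset_sub] by (simp add: A_def)
  have cardA: "card A = k" using MZ by (simp add: A_def card_image inj_on_def)
  have "card A \<le> (\<Sum>x\<in>A. count_list l x)"
  proof -
    have "(\<Sum>x\<in>A. 1) \<le> (\<Sum>x\<in>A. count_list l x)"
    proof (rule sum_mono)
      fix x assume "x \<in> A"
      then obtain j where j: "j \<in> majset n Z" "x = (j, True)" unfolding A_def by blast
      then show "1 \<le> count_list l x" unfolding majset_def l_def by simp
    qed
    then show ?thesis by simp
  qed
  then have "length (filter (\<lambda>x. x \<notin> A) l) = 0" using sum_count[OF finA, of l] lenl cardA by linarith
  then have allA: "\<forall>x\<in>set l. x \<in> A" by (simp add: filter_empty_conv)
  have c0: "count_list l (i, b) = 0" for b
  proof -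
    have "(i, b) \<notin> A" using i by (auto simp: A_def)
    then have "(i, b) \<notin> set l" using allA by blast
    then show ?thesis by (simp add: count_list_0_iff)
  qed
  have cY: "count_list (leaf_list Y) x = count_list l x + (if x = (i, True) then 1 else 0)" for x
    using count_mset_add[OF ms] by (simp add: l_def)
  have "insert i (majset n Z) \<subseteq> majset n Y"
  proof
    fix j assume "j \<in> insert i (majset n Z)"
    then show "j \<in> majset n Y"
    proof
      assume ji: "j = i"
      have a: "count_list (leaf_list Y) (i,True) = 1" using cY[of "(i,True)"] c0[of True] by simp
      have b: "count_list (leaf_list Y) (i,False) = 0" using cY[of "(i,False)"] c0[of False] by simp
      show ?thesis using i a b ji unfolding majset_def by simp
    next
      assume j: "j \<in> majset n Z"
      then have "j \<noteq> i" using i by auto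
      then have a: "count_list (leaf_list Y) (j,True) = count_list l (j,True)"
        and b: "count_list (leaf_list Y) (j,False) = count_list l (j,False)"
        using cY[of "(j,True)"] cY[of "(j,False)"] by auto
      show ?thesis using j a b unfolding majset_def l_def by simp
    qed
  qed
  then have "card (insert i (majset n Z)) \<le> MAJ n Y"
    unfolding MAJ_majset by (metis card_mono finite_subset majset_sub finite_atLeastAtMost)
  moreover have "card (insert i (majset n Z)) = k + 1"
    using i MZ finite_subset[OF majset_sub] by simp
  moreover have "MAJ n Y \<le> k + 1" using MAJ_le_len[of n Y] lenY by simp
  moreover have "C Y + 1 = 2 * (k + 1)" using C_len[OF Y] lenY by simp
  ultimately show ?thesis by (simp add: obj_def)
qed

lemma insert_prob:
  assumes n: "n \<ge> 1" and obj: "obj n Z = (k, 2*k-1)" and kn: "k < n"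
  shows "measure_pmf.prob (insert_op n Z) {Y. obj n Y = (k+1, 2*(k+1)-1)} \<ge> real (n - k) / real (2 * n)"
proof -
  define S where "S = {Y. obj n Y = (k+1, 2*(k+1)-1)}"
  define G where "G = (\<lambda>j. (j, True)) ` ({1..n} - majset n Z)"
  have MZ: "card (majset n Z) = k" using obj by (simp add: obj_def MAJ_majset)
  have inj: "inj_on (\<lambda>j. (j, True)) ({1..n} - majset n Z)" by (simp add: inj_on_def)
  have "card G = card ({1..n} - majset n Z)" unfolding G_def by (rule card_image[OF inj])
  also have "\<dots> = card {1..n} - card (majset n Z)"
    by (rule card_Diff_subset) (use majset_sub[of n Z] finite_subset[OF majset_sub] in auto)
  finally have cardG: "card G = n - k" using MZ by simp
  have Gsub: "G \<subseteq> set (lit_list n)" unfolding G_def set_lit_list by auto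
  have "measure_pmf.prob (unif_list (lit_list n)) G = card (set (lit_list n) \<inter> G) / length (lit_list n)"
    by (rule prob_unif[OF distinct_lit_list lit_list_ne[OF n]])
  also have "set (lit_list n) \<inter> G = G" using Gsub by blast
  finally have pG: "measure_pmf.prob (unif_list (lit_list n)) G = real (n - k) / real (2 * n)"
    by (simp only: cardG length_lit_list)
  have good: "Y \<in> S" if uG: "u \<in> G" and ms: "mset (leaf_list Y) = add_mset u (mset (leaf_list Z))" and nn: "Y \<noteq> None" for u Y
  proof -
    obtain i where i: "i \<in> {1..n} - majset n Z" "u = (i, True)" using uG unfolding G_def by blast
    show ?thesis using obj_insert[OF obj i(1) _ nn] ms i(2) unfolding S_def by blast
  qed
  have main: "measure_pmf.prob (insert_op n Z) S \<ge> measure_pmf.prob (unif_list (lit_list n)) G * 1"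
  proof (cases Z)
    case None
    have eq: "insert_op n Z = bind_pmf (unif_list (lit_list n)) (\<lambda>u. return_pmf (Some (Lf u)))"
      unfolding None insert_op_def option.case map_pmf_def ..
    show ?thesis unfolding eq
    proof (rule prob_bind_ge)
      fix u assume "u \<in> G"
      moreover have "mset (leaf_list (Some (Lf u))) = add_mset u (mset (leaf_list Z))"
        unfolding None leaf_list_def by simp
      ultimately have "Some (Lf u) \<in> S" using good by blast
      then show "1 \<le> measure_pmf.prob (return_pmf (Some (Lf u))) S" by (simp add: prob_one)
    qed simp
  next
    case (Some t)
    show ?thesis
      unfolding Some insert_op_def option.case
    proof (rule prob_bind_ge)
      fix u assume u: "u \<in> G"
      have "set_pmf (bind_pmf (pmf_of_set UNIV) (\<lambda>b. map_pmf Some (unif_list (ins_all t u b)))) \<subseteq> S"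
      proof
        fix Y assume "Y \<in> set_pmf (bind_pmf (pmf_of_set UNIV) (\<lambda>b. map_pmf Some (unif_list (ins_all t u b))))"
        then have "Y \<in> (\<Union>b\<in>set_pmf (pmf_of_set (UNIV::bool set)). Some ` set (ins_all t u b))"
          unfolding set_bind_pmf set_map_pmf by (simp only: set_unif[OF ins_all_ne])
        then obtain b t' where tb: "t' \<in> set (ins_all t u b)" and Y: "Y = Some t'" by blast
        have "mset (leaf_list Y) = add_mset u (mset (leaf_list Z))"
          using ins_all_prop[OF tb] unfolding Y Some leaf_list_def option.case by blast
        then show "Y \<in> S" using good[OF u] Y by blast
      qed
      then show "1 \<le> measure_pmf.prob (bind_pmf (pmf_of_set UNIV) (\<lambda>b. map_pmf Some (unif_list (ins_all t u b)))) S"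
        using prob_one by (metis order_refl)
    qed simp
  qed
  show ?thesis using main pG unfolding S_def by simp
qed

lemma delete_prob:
  "measure_pmf.prob (delete_op (Some t)) {Y. C Y < tsize t} = 1"
  by (rule prob_one) (auto simp: delete_op_def set_unif[OF del_all_ne] del_all_prop)



lemma drift_step:
  assumes sup: "\<forall>x\<in>set_pmf M. 0 \<le> f x \<and> f x \<le> c"
    and supE: "\<forall>x\<in>set_pmf M. x \<in> E \<longrightarrow> f x \<le> c - d"
    and pE: "measure_pmf.prob M E \<ge> q" and q: "q > 0" and dq: "d * q \<ge> 1"
  shows "1 + (\<integral>\<^sup>+x. ennreal (f x) \<partial>M) \<le> ennreal c"
proof -
  have d: "d > 0" using q dq by (metis mult_nonpos_nonneg not_le less_imp_le dual_order.trans zero_less_one not_one_le_zero)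
  define g where "g x = c - d * indicator E x" for x
  have fg: "\<forall>x\<in>set_pmf M. f x \<le> g x" using sup supE by (auto simp: g_def indicator_def)
  have "(\<integral>\<^sup>+x. ennreal (f x) \<partial>M) \<le> (\<integral>\<^sup>+x. ennreal (g x) \<partial>M)"
    by (rule nn_integral_mono_AE) (use fg in \<open>auto intro!: AE_pmfI ennreal_leI\<close>)
  also have "(\<integral>\<^sup>+x. ennreal (g x) \<partial>M) = ennreal (\<integral>x. g x \<partial>M)"
  proof (rule nn_integral_eq_integral)
    show "integrable (measure_pmf M) g"
      by (rule measure_pmf.integrable_const_bound[where B="\<bar>c\<bar> + \<bar>d\<bar>"]) (auto simp: g_def indicator_def)
    show "AE x in measure_pmf M. 0 \<le> g x" using fg sup by (auto intro!: AE_pmfI) (meson order_trans)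
  qed
  also have gi: "(\<integral>x. g x \<partial>M) = c - d * measure_pmf.prob M E"
  proof -
    have i0: "integrable (measure_pmf M) (indicator E :: _ \<Rightarrow> real)"
      by (rule measure_pmf.integrable_const_bound[where B="1"]) (auto simp: indicator_def)
    have i1: "integrable (measure_pmf M) (\<lambda>x. d * indicator E x)"
      using i0 by simp
    have "(\<integral>x. g x \<partial>M) = (\<integral>x. c \<partial>M) - (\<integral>x. d * indicator E x \<partial>M)"
      unfolding g_def by (rule Bochner_Integration.integral_diff[OF _ i1]) simp
    also have "(\<integral>x. c \<partial>M) = c" by simp
    also have "(\<integral>x. d * indicator E x \<partial>M) = d * measure_pmf.prob M E" using i0 by simp
    finally show ?thesis .
  qed
  finally have le: "(\<integral>\<^sup>+x. ennreal (f x) \<partial>M) \<le> ennreal (c - d * measure_pmf.prob M E)" .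
  have "0 \<le> (\<integral>x. g x \<partial>M)"
    by (rule integral_nonneg_AE) (use fg sup in \<open>auto intro!: AE_pmfI, meson order_trans\<close>)
  then have v0: "0 \<le> c - d * measure_pmf.prob M E" using gi by simp
  have "d * q \<le> d * measure_pmf.prob M E" using pE d by simp
  then have v: "c - d * measure_pmf.prob M E \<le> c - 1" using dq by linarith
  have "1 + (\<integral>\<^sup>+x. ennreal (f x) \<partial>M) \<le> 1 + ennreal (c - d * measure_pmf.prob M E)"
    using le by (rule add_left_mono)
  also have "1 + ennreal (c - d * measure_pmf.prob M E) = ennreal (1 + (c - d * measure_pmf.prob M E))"
    using v0 by (simp add: ennreal_plus)
  also have "\<dots> \<le> ennreal c" using v by (simp add: ennreal_leI)
  finally show ?thesis .
qed



definition wt :: "nat \<Rightarrow> nat \<Rightarrow> real" where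
  "wt n j = 18 * real n * (real n + 1) / (real n - real j)"

definition lev :: "nat \<Rightarrow> tree option set \<Rightarrow> nat" where
  "lev n P = (LEAST j. j = n \<or> \<not> good n (Suc j) P)"

definition h2 :: "nat \<Rightarrow> tree option set \<Rightarrow> real" where
  "h2 n P = (\<Sum>j\<in>{lev n P..<n}. wt n j)"

definition Bc :: "nat \<Rightarrow> real" where
  "Bc n = (\<Sum>j\<in>{0..<n}. wt n j)"

definition hr :: "nat \<Rightarrow> tree option set \<Rightarrow> real" where
  "hr n P = (if None \<in> P then h2 n P else 9 * (real n + 1) * real (Min (C ` P)) + Bc n)"

lemma wt_pos: "j < n \<Longrightarrow> wt n j > 0"
  by (simp add: wt_def)

lemma lev_le: "lev n P \<le> n"
  unfolding lev_def by (rule Least_le) simp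

lemma good_mono: "good n j P \<Longrightarrow> i \<le> j \<Longrightarrow> good n i P"
  by (auto simp: good_def)

lemma lev_good:
  assumes "None \<in> P" shows "good n (lev n P) P"
proof -
  have "good n j P" if "j \<le> lev n P" for j
    using that
  proof (induction j)
    case 0 then show ?case using assms good0 by blast
  next
    case (Suc j)
    then have "j < lev n P" by simp
    then have "\<not> (j = n \<or> \<not> good n (Suc j) P)" unfolding lev_def by (rule not_less_Least)
    then show ?case by simp
  qed
  then show ?thesis by simp
qed

lemma lev_ge:
  assumes "good n j P" "j \<le> n" shows "j \<le> lev n P"
proof (rule ccontr)
  assume "\<not> j \<le> lev n P"
  then have lt: "lev n P < j" by simp
  have "lev n P = n \<or> \<not> good n (Suc (lev n P)) P"
    unfolding lev_def by (rule LeastI[of _ n]) simp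
  then show False using lt assms good_mono[OF assms(1), of "Suc (lev n P)"] by auto
qed

lemma h2_nonneg: "h2 n P \<ge> 0"
  unfolding h2_def by (rule sum_nonneg) (simp add: less_imp_le wt_pos)

lemma h2_le_Bc: "h2 n P \<le> Bc n"
  unfolding h2_def Bc_def by (rule sum_mono2) (auto simp: less_imp_le wt_pos)

lemma h2_mono: "lev n P \<le> lev n P' \<Longrightarrow> h2 n P' \<le> h2 n P"
  unfolding h2_def by (rule sum_mono2) (auto simp: less_imp_le wt_pos)

lemma h2_dec:
  assumes "lev n P < n" "Suc (lev n P) \<le> lev n P'"
  shows "h2 n P' \<le> h2 n P - wt n (lev n P)"
proof -
  have "h2 n P' \<le> (\<Sum>j\<in>{Suc (lev n P)..<n}. wt n j)"
    unfolding h2_def by (rule sum_mono2) (use assms in \<open>auto simp: less_imp_le wt_pos\<close>)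
  also have "\<dots> = h2 n P - wt n (lev n P)"
    unfolding h2_def using sum.atLeast_Suc_lessThan[OF assms(1), of "wt n"] by simp
  finally show ?thesis .
qed

lemma Bc_nonneg: "Bc n \<ge> 0"
  unfolding Bc_def by (rule sum_nonneg) (simp add: less_imp_le wt_pos)

lemma Inv_C_pos: assumes "Inv n P" "None \<notin> P" shows "Min (C ` P) \<ge> 1"
proof -
  have "\<forall>x\<in>P. C x \<ge> 1"
  proof
    fix x assume "x \<in> P"
    then have "x \<noteq> None" using assms(2) by metis
    then have "C x \<noteq> 0" using C_eq0 by blast
    then show "C x \<ge> 1" by simp
  qed
  then show ?thesis using assms(1) unfolding Inv_def by (simp add: Min_ge_iff)
qed

lemma hr_nonneg: "Inv n P \<Longrightarrow> hr n P \<ge> 0"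
  unfolding hr_def using h2_nonneg Bc_nonneg by auto

lemma step_support:
  assumes "P' \<in> set_pmf (smo_step n mut P)" "Inv n P"
  shows "\<exists>X\<in>P. \<exists>Y\<in>set_pmf (mut X). P' = acc n P Y"
  using assms unfolding smo_step_acc Inv_def by auto

lemma step_prob:
  assumes "Inv n P" "X \<in> P"
  shows "measure_pmf.prob (smo_step n mut P) E \<ge> 1 / (real n + 1) * measure_pmf.prob (mut X) {Y. acc n P Y \<in> E}"
proof -
  have fin: "finite P" "P \<noteq> {}" using assms(1) by (auto simp: Inv_def)
  have "measure_pmf.prob (smo_step n mut P) E \<ge> measure_pmf.prob (pmf_of_set P) {X} * measure_pmf.prob (map_pmf (acc n P) (mut X)) E"
    unfolding smo_step_acc by (rule prob_bind_ge) auto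
  moreover have "measure_pmf.prob (pmf_of_set P) {X} = 1 / card P"
    using fin assms(2) by (simp add: measure_pmf_of_set)
  moreover have "measure_pmf.prob (map_pmf (acc n P) (mut X)) E = measure_pmf.prob (mut X) {Y. acc n P Y \<in> E}"
    by (simp add: vimage_def)
  moreover have "1 / (real n + 1) \<le> 1 / real (card P)"
  proof -
    have "card P > 0" using fin by (simp add: card_gt_0_iff)
    moreover have "real (card P) \<le> real n + 1" using Inv_card[OF assms(1)] by simp
    ultimately show ?thesis by (simp add: frac_le)
  qed
  ultimately have "measure_pmf.prob (smo_step n mut P) E \<ge> 1 / real (card P) * measure_pmf.prob (mut X) {Y. acc n P Y \<in> E}"
    by simp
  moreover have "1 / (real n + 1) * measure_pmf.prob (mut X) {Y. acc n P Y \<in> E} \<le> 1 / real (card P) * measure_pmf.prob (mut X) {Y. acc n P Y \<in> E}"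
    by (rule mult_right_mono[OF \<open>1 / (real n + 1) \<le> 1 / real (card P)\<close> measure_nonneg])
  ultimately show ?thesis by linarith
qed

lemma mut_del:
  assumes "mutok n mut"
  shows "measure_pmf.prob (mut X) S \<ge> measure_pmf.prob (delete_op X) S / 9"
proof -
  have a: "measure_pmf.prob (mut X) S \<ge> measure_pmf.prob (hvl n X) S / 3" using assms unfolding mutok_def by blast
  have b: "measure_pmf.prob (hvl n X) S \<ge> measure_pmf.prob (delete_op X) S / 3" by (rule hvl_del)
  show ?thesis using a b by linarith
qed

lemma mut_ins:
  assumes "mutok n mut"
  shows "measure_pmf.prob (mut X) S \<ge> measure_pmf.prob (insert_op n X) S / 9"
proof -
  have a: "measure_pmf.prob (mut X) S \<ge> measure_pmf.prob (hvl n X) S / 3" using assms unfolding mutok_def by blast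
  have b: "measure_pmf.prob (hvl n X) S \<ge> measure_pmf.prob (insert_op n X) S / 3" by (rule hvl_ins)
  show ?thesis using a b by linarith
qed



lemma supp_acc:
  assumes "mutok n mut" "Inv n P" "P' \<in> set_pmf (smo_step n mut P)"
  obtains X Y where "X \<in> P" "Y \<in> set_pmf (mut X)" "P' = acc n P Y" "valid n Y" "Inv n P'"
proof -
  obtain X Y where XY: "X \<in> P" "Y \<in> set_pmf (mut X)" "P' = acc n P Y"
    using step_support[OF assms(3,2)] by blast
  have "valid n Y" using assms(1,2) XY unfolding mutok_def Inv_def by blast
  then show ?thesis using that XY Inv_acc[OF assms(2)] by blast
qed

lemma drift_phase1:
  assumes n1: "n \<ge> 1" and mo: "mutok n mut" and inv: "Inv n P" and nN: "None \<notin> P"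
  shows "1 + (\<integral>\<^sup>+x. ennreal (hr n x) \<partial>smo_step n mut P) \<le> ennreal (hr n P)"
proof -
  define m where "m = Min (C ` P)"
  define A where "A = 9 * (real n + 1)"
  have fin: "finite P" "P \<noteq> {}" using inv by (auto simp: Inv_def)
  have m1: "m \<ge> 1" using Inv_C_pos[OF inv nN] by (simp add: m_def)
  have hrP: "hr n P = A * real m + Bc n" using nN by (simp add: hr_def m_def A_def)
  have "m \<in> C ` P" unfolding m_def using fin by (intro Min_in) auto
  then obtain X where X: "X \<in> P" "C X = m" by auto
  have mle: "m \<le> C Z" if "Z \<in> P" for Z unfolding m_def using fin that by simp
  define E where "E = {P'. \<exists>Y\<in>P'. C Y < m}"
  have A0: "A > 0" by (simp add: A_def)
  show ?thesis
  proof (rule drift_step[where d = A and q = "1 / (9 * (real n + 1))" and E = E])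
    show "\<forall>x\<in>set_pmf (smo_step n mut P). 0 \<le> hr n x \<and> hr n x \<le> hr n P"
    proof
      fix P' assume "P' \<in> set_pmf (smo_step n mut P)"
      then obtain X' Y where XY: "P' = acc n P Y" "Inv n P'" using supp_acc[OF mo inv] by metis
      have "hr n P' \<le> hr n P"
      proof (cases "None \<in> P'")
        case True
        then have "hr n P' = h2 n P'" by (simp add: hr_def)
        also have "\<dots> \<le> Bc n" by (rule h2_le_Bc)
        also have "\<dots> \<le> hr n P" using hrP A0 by simp
        finally show ?thesis .
      next
        case False
        obtain Z' where Z': "Z' \<in> P'" "C Z' \<le> C X" using C_acc[OF X(1), of n Y] XY(1) by blast
        have "Min (C ` P') \<le> C Z'" using XY(2) Z'(1) by (simp add: Inv_def)
        then have "real (Min (C ` P')) \<le> real m" using Z' X by simp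
        then have "A * real (Min (C ` P')) \<le> A * real m" using A0 by simp
        moreover have "hr n P' = A * real (Min (C ` P')) + Bc n" using False by (simp add: hr_def A_def)
        ultimately show ?thesis using hrP by simp
      qed
      then show "0 \<le> hr n P' \<and> hr n P' \<le> hr n P" using hr_nonneg[OF XY(2)] by simp
    qed
    show "\<forall>x\<in>set_pmf (smo_step n mut P). x \<in> E \<longrightarrow> hr n x \<le> hr n P - A"
    proof (intro ballI impI)
      fix P' assume "P' \<in> set_pmf (smo_step n mut P)" "P' \<in> E"
      then obtain X' Y where XY: "P' = acc n P Y" "Inv n P'" using supp_acc[OF mo inv] by metis
      obtain Y' where Y': "Y' \<in> P'" "C Y' < m" using \<open>P' \<in> E\<close> by (auto simp: E_def)
      show "hr n P' \<le> hr n P - A"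
      proof (cases "None \<in> P'")
        case True
        then have "hr n P' = h2 n P'" by (simp add: hr_def)
        also have "\<dots> \<le> Bc n" by (rule h2_le_Bc)
        also have "\<dots> \<le> hr n P - A" using hrP A0 m1 by (simp add: algebra_simps)
        finally show ?thesis .
      next
        case False
        have "Min (C ` P') \<le> C Y'" using XY(2) Y'(1) by (simp add: Inv_def)
        then have "real (Min (C ` P')) \<le> real m - 1" using Y' by linarith
        then have "A * real (Min (C ` P')) \<le> A * (real m - 1)" using A0 by simp
        moreover have "hr n P' = A * real (Min (C ` P')) + Bc n" using False by (simp add: hr_def A_def)
        ultimately show ?thesis using hrP by (simp add: algebra_simps)
      qed
    qed
    show "measure_pmf.prob (smo_step n mut P) E \<ge> 1 / (9 * (real n + 1))"
    proof -
      obtain t where t: "X = Some t" using X nN by (cases X) auto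
      have Ct: "tsize t = m" using X t by (simp add: C_def)
      have sub: "{Y. C Y < tsize t} \<subseteq> {Y. acc n P Y \<in> E}"
      proof
        fix Y assume "Y \<in> {Y. C Y < tsize t}"
        then have CY: "C Y < m" using Ct by simp
        have "\<not> (\<exists>Z\<in>P. sdom n Z Y)"
        proof
          assume "\<exists>Z\<in>P. sdom n Z Y"
          then obtain Z where "Z \<in> P" "sdom n Z Y" by blast
          then have "C Z \<le> C Y" "m \<le> C Z" using mle by (auto simp: sdom_def wdom_def)
          then show False using CY by simp
        qed
        then have "Y \<in> acc n P Y" by (rule acc_in)
        then show "Y \<in> {Y. acc n P Y \<in> E}" using CY by (auto simp: E_def)
      qed
      have "1 / 9 = measure_pmf.prob (delete_op X) {Y. C Y < tsize t} / 9"
        using delete_prob[of t] t by simp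
      also have "\<dots> \<le> measure_pmf.prob (delete_op X) {Y. acc n P Y \<in> E} / 9"
        using measure_pmf.finite_measure_mono[OF sub] by (simp add: divide_right_mono)
      also have "\<dots> \<le> measure_pmf.prob (mut X) {Y. acc n P Y \<in> E}" by (rule mut_del[OF mo])
      finally have p9: "1 / 9 \<le> measure_pmf.prob (mut X) {Y. acc n P Y \<in> E}" .
      have "1 / (9 * (real n + 1)) = 1 / (real n + 1) * (1 / 9)" by simp
      also have "\<dots> \<le> 1 / (real n + 1) * measure_pmf.prob (mut X) {Y. acc n P Y \<in> E}"
        using p9 by (intro mult_left_mono) auto
      also have "\<dots> \<le> measure_pmf.prob (smo_step n mut P) E" by (rule step_prob[OF inv X(1)])
      finally show ?thesis .
    qed
    show "0 < 1 / (9 * (real n + 1))" by simp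
    show "1 \<le> A * (1 / (9 * (real n + 1)))" by (simp add: A_def)
  qed
qed



lemma drift_phase2:
  assumes n1: "n \<ge> 1" and mo: "mutok n mut" and inv: "Inv n P" and hN: "None \<in> P"
    and nc: "\<not> covers_front n P"
  shows "1 + (\<integral>\<^sup>+x. ennreal (hr n x) \<partial>smo_step n mut P) \<le> ennreal (hr n P)"
proof -
  define k where "k = lev n P"
  have gk: "good n k P" using lev_good[OF hN] by (simp add: k_def)
  have kn: "k < n"
  proof -
    have "k \<le> n" using lev_le by (simp add: k_def)
    moreover have "k \<noteq> n" using gk nc good_covers by blast
    ultimately show ?thesis by simp
  qed
  have hrP: "hr n P = h2 n P" using hN by (simp add: hr_def)
  define E where "E = {P'. good n (Suc k) P'}"
  define q where "q = real (n - k) / (18 * real n * (real n + 1))"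
  show ?thesis
  proof (rule drift_step[where d = "wt n k" and q = q and E = E])
    show "\<forall>x\<in>set_pmf (smo_step n mut P). 0 \<le> hr n x \<and> hr n x \<le> hr n P"
    proof
      fix P' assume "P' \<in> set_pmf (smo_step n mut P)"
      then obtain X' Y where XY: "P' = acc n P Y" "Inv n P'" using supp_acc[OF mo inv] by metis
      have hN': "None \<in> P'" using None_acc[OF hN] XY(1) by simp
      have "good n k P'" using good_acc[OF gk] XY(1) by simp
      then have "k \<le> lev n P'" using lev_ge kn by simp
      then have "h2 n P' \<le> h2 n P" using h2_mono by (simp add: k_def)
      then show "0 \<le> hr n P' \<and> hr n P' \<le> hr n P" using hN' hrP h2_nonneg by (simp add: hr_def)
    qed
    show "\<forall>x\<in>set_pmf (smo_step n mut P). x \<in> E \<longrightarrow> hr n x \<le> hr n P - wt n k"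
    proof (intro ballI impI)
      fix P' assume "P' \<in> set_pmf (smo_step n mut P)" "P' \<in> E"
      then obtain X' Y where XY: "P' = acc n P Y" "Inv n P'" using supp_acc[OF mo inv] by metis
      have hN': "None \<in> P'" using None_acc[OF hN] XY(1) by simp
      have "Suc k \<le> lev n P'" using lev_ge[of n "Suc k" P'] kn \<open>P' \<in> E\<close> by (simp add: E_def)
      then have "h2 n P' \<le> h2 n P - wt n k" using h2_dec[of n P P'] kn by (simp add: k_def)
      then show "hr n P' \<le> hr n P - wt n k" using hN' hrP by (simp add: hr_def)
    qed
    show "measure_pmf.prob (smo_step n mut P) E \<ge> q"
    proof -
      obtain Z where Z: "Z \<in> P" "obj n Z = (k, 2*k-1)" using gk by (auto simp: good_def)
      define S where "S = {Y. obj n Y = (k+1, 2*(k+1)-1)}"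
      have sub: "S \<subseteq> {Y. acc n P Y \<in> E}"
      proof
        fix Y assume "Y \<in> S"
        then have oY: "obj n Y = (Suc k, 2 * Suc k - 1)" by (simp add: S_def)
        have "\<not> (\<exists>Z\<in>P. sdom n Z Y)" using not_sdom_opt[OF oY] by blast
        then have YA: "Y \<in> acc n P Y" by (rule acc_in)
        have "good n k (acc n P Y)" by (rule good_acc[OF gk])
        have "good n (Suc k) (acc n P Y)" unfolding good_def
        proof (intro allI impI)
          fix i assume "i \<le> Suc k"
          then consider "i \<le> k" | "i = Suc k" by linarith
          then show "\<exists>Z\<in>acc n P Y. obj n Z = (i, 2 * i - 1)"
          proof cases
            case 1 then show ?thesis using \<open>good n k (acc n P Y)\<close> unfolding good_def by blast
          next
            case 2 then show ?thesis using YA oY by blast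
          qed
        qed
        then show "Y \<in> {Y. acc n P Y \<in> E}" by (simp add: E_def)
      qed
      have "real (n - k) / real (2 * n) / 9 \<le> measure_pmf.prob (insert_op n Z) S / 9"
        using insert_prob[OF n1 Z(2) kn] by (simp add: S_def divide_right_mono)
      also have "\<dots> \<le> measure_pmf.prob (insert_op n Z) {Y. acc n P Y \<in> E} / 9"
        using measure_pmf.finite_measure_mono[OF sub] by (simp add: divide_right_mono)
      also have "\<dots> \<le> measure_pmf.prob (mut Z) {Y. acc n P Y \<in> E}" by (rule mut_ins[OF mo])
      finally have p9: "real (n - k) / real (2 * n) / 9 \<le> measure_pmf.prob (mut Z) {Y. acc n P Y \<in> E}" .
      have "q = 1 / (real n + 1) * (real (n - k) / real (2 * n) / 9)" by (simp add: q_def field_simps)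
      also have "\<dots> \<le> 1 / (real n + 1) * measure_pmf.prob (mut Z) {Y. acc n P Y \<in> E}"
        using p9 by (intro mult_left_mono) auto
      also have "\<dots> \<le> measure_pmf.prob (smo_step n mut P) E" by (rule step_prob[OF inv Z(1)])
      finally show ?thesis .
    qed
    show "0 < q" using kn n1 by (simp add: q_def)
    show "1 \<le> wt n k * q"
    proof -
      have d: "real (n - k) = real n - real k" using kn by (simp add: of_nat_diff)
      have p: "real n - real k > 0" using kn by simp
      have X: "18 * real n * (real n + 1) \<noteq> 0" using n1 by simp
      have gen: "\<And>a b::real. a \<noteq> 0 \<Longrightarrow> b \<noteq> 0 \<Longrightarrow> (a / b) * (b / a) = 1" by simp
      have "wt n k * q = (18 * real n * (real n + 1) / (real n - real k)) * ((real n - real k) / (18 * real n * (real n + 1)))"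
        unfolding wt_def q_def d by simp
      also have "\<dots> = 1" using gen X p by simp
      finally show ?thesis by simp
    qed
  qed
qed

lemma main_bound:
  assumes n1: "n \<ge> 1" and mo: "mutok n mut" and v: "valid n X0"
  shows "opt_time n mut X0 \<le> ennreal (hr n {X0})"
proof -
  have "opt_time n mut X0 = (\<Sum>t. ennreal (measure_pmf.prob (((\<lambda>D. bind_pmf D (\<lambda>s. if covers_front n s then return_pmf s else smo_step n mut s)) ^^ t) (return_pmf {X0})) {s. \<not> covers_front n s}))"
    unfolding opt_time_def stopped_dist_def by (rule refl)
  also have "\<dots> \<le> (\<lambda>P. ennreal (hr n P)) {X0}"
  proof (rule drift_bound[where I = "Inv n"])
    show "Inv n {X0}" using v by (simp add: Inv_def)
    show "Inv n s'" if "Inv n s" "\<not> covers_front n s" "s' \<in> set_pmf (smo_step n mut s)" for s s'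
      using supp_acc[OF mo that(1) that(3)] by metis
    show "1 + (\<integral>\<^sup>+x. ennreal (hr n x) \<partial>smo_step n mut s) \<le> ennreal (hr n s)"
      if "Inv n s" "\<not> covers_front n s" for s
    proof (cases "None \<in> s")
      case True from drift_phase2[OF n1 mo that(1) True that(2)] show ?thesis .
    next
      case False from drift_phase1[OF n1 mo that(1) False] show ?thesis .
    qed
  qed
  finally show ?thesis by simp
qed

lemma hr_init: "hr n {X0} \<le> 9 * (real n + 1) * real (C X0) + Bc n"
proof (cases "X0 = None")
  case True
  then show ?thesis using h2_le_Bc[of n "{X0}"] by (simp add: hr_def C_def)
next
  case False
  then have "None \<notin> {X0}" by auto
  then show ?thesis by (simp add: hr_def)
qed

lemma harm_le: "n \<ge> 1 \<Longrightarrow> (harm n :: real) \<le> 1 + ln (real n)"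
proof (induction n rule: dec_induct)
  case base then show ?case by (simp add: harm_def)
next
  case (step m)
  have m: "real m > 0" using step by simp
  have "ln (real m / (real m + 1)) \<le> real m / (real m + 1) - 1"
    by (rule ln_le_minus_one) (use m in simp)
  also have "\<dots> = - 1 / (real m + 1)" using m by (simp add: field_simps)
  finally have "1 / (real m + 1) \<le> ln (real m + 1) - ln (real m)"
    using m by (simp add: ln_div)
  then have "inverse (real (Suc m)) \<le> ln (real (Suc m)) - ln (real m)"
    by (simp add: inverse_eq_divide add.commute)
  then show ?case using step.IH by (simp add: harm_Suc)
qed

lemma Bc_harm: "Bc n = 18 * real n * (real n + 1) * harm n"
proof -
  have "Bc n = (\<Sum>j<n. 18 * real n * (real n + 1) * inverse (real (Suc (n - Suc j))))"
    unfolding Bc_def wt_def atLeast0LessThan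
    by (rule sum.cong) (auto simp: of_nat_diff divide_inverse)
  also have "\<dots> = (\<Sum>j<n. 18 * real n * (real n + 1) * inverse (real (Suc j)))"
    by (rule sum.nat_diff_reindex)
  also have "\<dots> = 18 * real n * (real n + 1) * harm n"
    by (simp add: harm_altdef sum_distrib_left)
  finally show ?thesis .
qed

lemma final_arith:
  assumes n: "n \<ge> 3"
  shows "9 * (real n + 1) * real c0 + Bc n \<le> 72 * (real n * real c0 + real n ^ 2 * ln (real n))"
proof -
  have l1: "ln (real n) \<ge> 1"
  proof -
    have "exp 1 \<le> (3::real)" by (rule exp_le)
    also have "3 \<le> real n" using n by simp
    finally have e: "exp 1 \<le> real n" .
    have "ln (exp 1) \<le> ln (real n)"
      using e n by (subst ln_le_cancel_iff) auto
    then show ?thesis by simp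
  qed
  define L where "L = ln (real n)"
  define N where "N = real n"
  have N3: "N \<ge> 3" using n by (simp add: N_def)
  have h: "harm n \<le> 2 * L" using harm_le[of n] n l1 by (simp add: L_def)
  have "Bc n = (18 * N * (N + 1)) * harm n" by (simp add: Bc_harm N_def)
  also have "\<dots> \<le> (18 * N * (N + 1)) * (2 * L)"
    by (rule mult_left_mono[OF h]) (use N3 in simp)
  also have "\<dots> = (36 * N * L) * (N + 1)" by (simp add: algebra_simps)
  also have "\<dots> \<le> (36 * N * L) * (2 * N)"
    by (rule mult_left_mono) (use N3 l1 in \<open>simp_all add: L_def\<close>)
  also have "\<dots> = 72 * (N ^ 2 * L)" by (simp add: power2_eq_square algebra_simps)
  finally have b: "Bc n \<le> 72 * (N ^ 2 * L)" .
  have c: "9 * (N + 1) * real c0 \<le> 72 * (N * real c0)"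
  proof -
    have "9 * (N + 1) \<le> 72 * N" using N3 by simp
    then have "(9 * (N + 1)) * real c0 \<le> (72 * N) * real c0" by (rule mult_right_mono) simp
    then show ?thesis by simp
  qed
  have e: "72 * (N * real c0 + N ^ 2 * L) = 72 * (N * real c0) + 72 * (N ^ 2 * L)"
    by (simp add: algebra_simps)
  show ?thesis using b c e unfolding N_def L_def by linarith
qed

theorem theorem5:
  shows "\<exists>c::real. c > 0 \<and> (\<exists>n0::nat. \<forall>n \<ge> n0. \<forall>X0. valid n X0 \<longrightarrow>
     opt_time n (mut_single n) X0 \<le> ennreal (c * (real n * real (C X0) + real n ^ 2 * ln (real n)))
   \<and> opt_time n (mut_multi n) X0 \<le> ennreal (c * (real n * real (C X0) + real n ^ 2 * ln (real n))))"
proof (intro exI conjI allI impI)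
  show "(72::real) > 0" by simp
  fix n :: nat and X0 assume n: "n \<ge> 3" and v: "valid n X0"
  have n1: "n \<ge> 1" using n by simp
  have b: "ennreal (hr n {X0}) \<le> ennreal (72 * (real n * real (C X0) + real n ^ 2 * ln (real n)))"
    using hr_init[of n X0] final_arith[OF n, of "C X0"] by (intro ennreal_leI) linarith
  show "opt_time n (mut_single n) X0 \<le> ennreal (72 * (real n * real (C X0) + real n ^ 2 * ln (real n)))"
    using main_bound[OF n1 mutok_single[OF n1] v] b by (rule order_trans)
  show "opt_time n (mut_multi n) X0 \<le> ennreal (72 * (real n * real (C X0) + real n ^ 2 * ln (real n)))"
    using main_bound[OF n1 mutok_multi[OF n1] v] b by (rule order_trans)
qed

end
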